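(* Let $Y$ be a polygonal complex and let $G(Y)$ be a developable complex of groups over $Y$ whose universal cover is Bourdon's building $I_{p,v}$. Then the indexing $\mathrm{Ind}_{G(Y)}$ induced by $G(Y)$ is $v$-thick.
   Context: Let $Y'$ be the first barycentric subdivision of $Y$. Its vertices are barycenters of cells of $Y$. Each edge $a$ of $Y'$ joins the barycenters of cells $\tau \subsetneq \tau'$ and is oriented from $i(a) = \tau'$ to $t(a) = \tau$. A complex of groups $G(Y)$ assigns: - a group $G_\tau$ to each vertex of $Y'$; - a monomorphism $\psi_a : G_{i(a)} \to G_{t(a)}$ to each edge $a$; - twisting elements $g_{a,b} \in G_{t(a)}$ for composable pairs, satisfying $\mathrm{Ad}(g_{a,b})\psi_{ab} = \psi_a\psi_b$. An action without inversions of a group on a simply connected polygonal complex $X$ induces a complex of groups over the quotient, with local groups the stabilizers of chosen lifts of cells. $G(Y)$ is developable if it is isomorphic to a complex of groups arising in this way; $X$ is then its universal cover. For $p \geq 5$ and $v \geq 2$, Bourdon's building $I_{p,v}$ is the unique simply connected polygonal $2$-complex whose $2$-cells are regular right-angled hyperbolic $p$-gons and whose vertex links are $K_{v,v}$; it is locally finite, so all indices below are finite. The induced indexing assigns to each edge $a$ of $Y'$ the integer $\mathrm{Ind}_{G(Y)}(a) = |G_{t(a)} : \psi_a(G_{i(a)})|$. An indexing $\mathrm{Ind}$ of $Y'$ (a positive integer for each edge of $Y'$) is $v$-thick if, for every vertex $\sigma$ of $Y'$ that is the midpoint of an edge of $Y$, $\sum_{a : t(a) = \sigma} \mathrm{Ind}(a)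 = v$. *)

theory Defs
  imports "HOL-Algebra.Coset"
begin

section \<open>Combinatorial polygonal 2-complexes\<close>

text \<open>A polygonal 2-complex is given combinatorially by a set of cells XC, a dimension
function dX (values 0, 1, 2) and the strict face relation fX (fX a c: a is a proper face of c).\<close>

definition vfaces :: "('x \<Rightarrow> nat) \<Rightarrow> ('x \<Rightarrow> 'x \<Rightarrow> bool) \<Rightarrow> 'x \<Rightarrow> 'x set" where
  "vfaces dX fX c = {y. fX y c \<and> dX y = 0}"

definition efaces :: "('x \<Rightarrow> nat) \<Rightarrow> ('x \<Rightarrow> 'x \<Rightarrow> bool) \<Rightarrow> 'x \<Rightarrow> 'x set" where
  "efaces dX fX c = {y. fX y c \<and> dX y = 1}"

definition p_gon_cell :: "nat \<Rightarrow> ('x \<Rightarrow> nat) \<Rightarrow> ('x \<Rightarrow> 'x \<Rightarrow> bool) \<Rightarrow> 'x \<Rightarrow> bool" where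
  "p_gon_cell p dX fX c \<longleftrightarrow>
     (\<exists>xs es. length xs = p \<and> length es = p \<and> distinct xs \<and> distinct es \<and>
        vfaces dX fX c = set xs \<and> efaces dX fX c = set es \<and>
        (\<forall>j<p. vfaces dX fX (es ! j) = {xs ! j, xs ! ((j + 1) mod p)}))"

definition polygonal_complex :: "nat \<Rightarrow> 'x set \<Rightarrow> ('x \<Rightarrow> nat) \<Rightarrow> ('x \<Rightarrow> 'x \<Rightarrow> bool) \<Rightarrow> bool" where
  "polygonal_complex p XC dX fX \<longleftrightarrow>
     (\<forall>c\<in>XC. dX c \<le> 2) \<and>
     (\<forall>a c. fX a c \<longrightarrow> a \<in> XC \<and> c \<in> XC \<and> dX a < dX c) \<and>
     (\<forall>a b c. fX a b \<longrightarrow> fX b c \<longrightarrow> fX a c) \<and>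
     (\<forall>e\<in>XC. dX e = 1 \<longrightarrow> finite (vfaces dX fX e) \<and> card (vfaces dX fX e) = 2) \<and>
     (\<forall>c\<in>XC. dX c = 2 \<longrightarrow> p_gon_cell p dX fX c)"

text \<open>The link of every vertex is the complete bipartite graph K_{v,v}: link vertices are the
edges at x, and two link vertices are joined by one link edge for each 2-cell containing both.\<close>
definition links_Kvv :: "nat \<Rightarrow> 'x set \<Rightarrow> ('x \<Rightarrow> nat) \<Rightarrow> ('x \<Rightarrow> 'x \<Rightarrow> bool) \<Rightarrow> bool" where
  "links_Kvv v XC dX fX \<longleftrightarrow>
     (\<forall>x\<in>XC. dX x = 0 \<longrightarrow>
       (let L = {e\<in>XC. dX e = 1 \<and> fX x e} in
        \<exists>A B. A \<union> B = L \<and> A \<inter> B = {} \<and> finite A \<and> finite B \<and> card A = v \<and> card B = v \<and>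
          (\<forall>e1\<in>L. \<forall>e2\<in>L. e1 \<noteq> e2 \<longrightarrow>
             (let F = {c\<in>XC. dX c = 2 \<and> fX e1 c \<and> fX e2 c} in
              finite F \<and> card F = (if (e1 \<in> A \<longleftrightarrow> e2 \<in> B) then 1 else 0)))))"

text \<open>Oriented edges (e, a, b): e traversed from a to b.\<close>
definition oedges :: "'x set \<Rightarrow> ('x \<Rightarrow> nat) \<Rightarrow> ('x \<Rightarrow> 'x \<Rightarrow> bool) \<Rightarrow> ('x \<times> 'x \<times> 'x) set" where
  "oedges XC dX fX = {(e, a, b). e \<in> XC \<and> dX e = 1 \<and> a \<noteq> b \<and> vfaces dX fX e = {a, b}}"

fun chained :: "('x \<times> 'x \<times> 'x) list \<Rightarrow> bool" where
  "chained [] = True"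
| "chained [_] = True"
| "chained ((e, a, b) # (e', a', b') # r) = (b = a' \<and> chained ((e', a', b') # r))"

definition epath :: "'x set \<Rightarrow> ('x \<Rightarrow> nat) \<Rightarrow> ('x \<Rightarrow> 'x \<Rightarrow> bool) \<Rightarrow> ('x \<times> 'x \<times> 'x) list \<Rightarrow> bool" where
  "epath XC dX fX ws \<longleftrightarrow> set ws \<subseteq> oedges XC dX fX \<and> chained ws"

definition pstart :: "('x \<times> 'x \<times> 'x) list \<Rightarrow> 'x" where
  "pstart ws = fst (snd (hd ws))"

definition pend :: "('x \<times> 'x \<times> 'x) list \<Rightarrow> 'x" where
  "pend ws = snd (snd (last ws))"

definition closed_path :: "('x \<times> 'x \<times> 'x) list \<Rightarrow> bool" where
  "closed_path ws \<longleftrightarrow> ws = [] \<or> pstart ws = pend ws"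

definition boundary_loop :: "'x set \<Rightarrow> ('x \<Rightarrow> nat) \<Rightarrow> ('x \<Rightarrow> 'x \<Rightarrow> bool) \<Rightarrow> 'x \<Rightarrow> ('x \<times> 'x \<times> 'x) list \<Rightarrow> bool" where
  "boundary_loop XC dX fX f c \<longleftrightarrow> f \<in> XC \<and> dX f = 2 \<and> c \<noteq> [] \<and> epath XC dX fX c \<and> closed_path c \<and>
     distinct (map fst c) \<and> set (map fst c) = efaces dX fX f"

text \<open>Elementary homotopies of edge paths: removing a backtrack, or removing a boundary loop of a 2-cell.\<close>
definition elem_htp :: "'x set \<Rightarrow> ('x \<Rightarrow> nat) \<Rightarrow> ('x \<Rightarrow> 'x \<Rightarrow> bool) \<Rightarrow>
    (('x \<times> 'x \<times> 'x) list \<times> ('x \<times> 'x \<times> 'x) list) set" where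
  "elem_htp XC dX fX = {(P, Q). epath XC dX fX P \<and>
     ((\<exists>u w e a b. P = u @ [(e, a, b), (e, b, a)] @ w \<and> Q = u @ w) \<or>
      (\<exists>u w c f. P = u @ c @ w \<and> Q = u @ w \<and> boundary_loop XC dX fX f c))}"

definition simply_connected_cx :: "'x set \<Rightarrow> ('x \<Rightarrow> nat) \<Rightarrow> ('x \<Rightarrow> 'x \<Rightarrow> bool) \<Rightarrow> bool" where
  "simply_connected_cx XC dX fX \<longleftrightarrow>
     XC \<noteq> {} \<and>
     (\<forall>a\<in>XC. \<forall>b\<in>XC. dX a = 0 \<longrightarrow> dX b = 0 \<longrightarrow>
        (\<exists>ws. epath XC dX fX ws \<and> ((ws = [] \<and> a = b) \<or> (ws \<noteq> [] \<and> pstart ws = a \<and> pend ws = b)))) \<and>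
     (\<forall>ws. epath XC dX fX ws \<longrightarrow> closed_path ws \<longrightarrow>
        (ws, []) \<in> (elem_htp XC dX fX \<union> (elem_htp XC dX fX)\<inverse>)\<^sup>*)"

text \<open>Bourdon's building I_{p,v}: the (unique) simply connected polygonal 2-complex whose 2-cells are
p-gons and whose vertex links are K_{v,v} (its metric realisation uses regular right-angled hyperbolic
p-gons). A complex satisfying this predicate is thus (isomorphic to) I_{p,v}.\<close>
definition bourdon_building :: "nat \<Rightarrow> nat \<Rightarrow> 'x set \<Rightarrow> ('x \<Rightarrow> nat) \<Rightarrow> ('x \<Rightarrow> 'x \<Rightarrow> bool) \<Rightarrow> bool" where
  "bourdon_building p v XC dX fX \<longleftrightarrow>
     polygonal_complex p XC dX fX \<and> links_Kvv v XC dX fX \<and> simply_connected_cx XC dX fX"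

section \<open>Complexes of groups over the scwol Y'\<close>

text \<open>Y' is given by vertex set V (barycenters of cells of Y, with dimension dimY), edge set E,
initial/terminal vertex maps src = i and tgt = t, and composition cmp a b = ab for i(a) = t(b).\<close>
definition complex_of_groups ::
  "'v set \<Rightarrow> 'e set \<Rightarrow> ('e \<Rightarrow> 'v) \<Rightarrow> ('e \<Rightarrow> 'v) \<Rightarrow> ('e \<Rightarrow> 'e \<Rightarrow> 'e) \<Rightarrow>
   ('v \<Rightarrow> 'g monoid) \<Rightarrow> ('e \<Rightarrow> 'g \<Rightarrow> 'g) \<Rightarrow> ('e \<Rightarrow> 'e \<Rightarrow> 'g) \<Rightarrow> bool" where
  "complex_of_groups V E src tgt cmp Gs psi tw \<longleftrightarrow>
     (\<forall>\<sigma>\<in>V. group (Gs \<sigma>)) \<and>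
     (\<forall>a\<in>E. src a \<in> V \<and> tgt a \<in> V \<and> psi a \<in> hom (Gs (src a)) (Gs (tgt a)) \<and>
            inj_on (psi a) (carrier (Gs (src a)))) \<and>
     (\<forall>a\<in>E. \<forall>b\<in>E. src a = tgt b \<longrightarrow>
        cmp a b \<in> E \<and> src (cmp a b) = src b \<and> tgt (cmp a b) = tgt a \<and>
        tw a b \<in> carrier (Gs (tgt a)) \<and>
        (\<forall>x\<in>carrier (Gs (src b)).
           tw a b \<otimes>\<^bsub>Gs (tgt a)\<^esub> psi (cmp a b) x \<otimes>\<^bsub>Gs (tgt a)\<^esub> inv\<^bsub>Gs (tgt a)\<^esub> (tw a b)
           = psi a (psi b x)))"

section \<open>Group actions and the induced complex of groups\<close>

text \<open>H acts on X by automorphisms of the polygonal complex, without inversions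
(an element stabilising a cell fixes it pointwise, i.e. fixes all of its faces).\<close>
definition acts_without_inversions ::
  "'h monoid \<Rightarrow> ('h \<Rightarrow> 'x \<Rightarrow> 'x) \<Rightarrow> 'x set \<Rightarrow> ('x \<Rightarrow> nat) \<Rightarrow> ('x \<Rightarrow> 'x \<Rightarrow> bool) \<Rightarrow> bool" where
  "acts_without_inversions H act XC dX fX \<longleftrightarrow>
     group H \<and>
     (\<forall>h\<in>carrier H. bij_betw (act h) XC XC) \<and>
     (\<forall>x\<in>XC. act \<one>\<^bsub>H\<^esub> x = x) \<and>
     (\<forall>g\<in>carrier H. \<forall>h\<in>carrier H. \<forall>x\<in>XC. act (g \<otimes>\<^bsub>H\<^esub> h) x = act g (act h x)) \<and>
     (\<forall>h\<in>carrier H. \<forall>x\<in>XC. dX (act h x) = dX x) \<and>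
     (\<forall>h\<in>carrier H. \<forall>a\<in>XC. \<forall>c\<in>XC. fX (act h a) (act h c) \<longleftrightarrow> fX a c) \<and>
     (\<forall>h\<in>carrier H. \<forall>c\<in>XC. act h c = c \<longrightarrow> (\<forall>a. fX a c \<longrightarrow> act h a = a))"

text \<open>pv, pe identify the quotient scwol X'/H with Y' (pe c a is the image of the edge of X'
from the barycenter of c to that of its face a).\<close>
definition quotient_iso ::
  "'h monoid \<Rightarrow> ('h \<Rightarrow> 'x \<Rightarrow> 'x) \<Rightarrow> 'x set \<Rightarrow> ('x \<Rightarrow> nat) \<Rightarrow> ('x \<Rightarrow> 'x \<Rightarrow> bool) \<Rightarrow>
   'v set \<Rightarrow> 'e set \<Rightarrow> ('e \<Rightarrow> 'v) \<Rightarrow> ('e \<Rightarrow> 'v) \<Rightarrow> ('e \<Rightarrow> 'e \<Rightarrow> 'e) \<Rightarrow> ('v \<Rightarrow> nat) \<Rightarrow>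
   ('x \<Rightarrow> 'v) \<Rightarrow> ('x \<Rightarrow> 'x \<Rightarrow> 'e) \<Rightarrow> bool" where
  "quotient_iso H act XC dX fX V E src tgt cmp dimY pv pe \<longleftrightarrow>
     pv ` XC = V \<and>
     (\<forall>x\<in>XC. dimY (pv x) = dX x) \<and>
     (\<forall>x\<in>XC. \<forall>y\<in>XC. pv x = pv y \<longleftrightarrow> (\<exists>h\<in>carrier H. act h x = y)) \<and>
     {pe c a | c a. fX a c} = E \<and>
     (\<forall>a c. fX a c \<longrightarrow> src (pe c a) = pv c \<and> tgt (pe c a) = pv a) \<and>
     (\<forall>a c a' c'. fX a c \<longrightarrow> fX a' c' \<longrightarrow>
        (pe c a = pe c' a' \<longleftrightarrow> (\<exists>h\<in>carrier H. act h c = c' \<and> act h a = a'))) \<and>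
     (\<forall>a b c. fX a b \<longrightarrow> fX b c \<longrightarrow> cmp (pe b a) (pe c b) = pe c a)"

definition stab :: "'h monoid \<Rightarrow> ('h \<Rightarrow> 'x \<Rightarrow> 'x) \<Rightarrow> 'x \<Rightarrow> 'h set" where
  "stab H act x = {h\<in>carrier H. act h x = x}"

text \<open>Choice data for the induced complex of groups: lifts of the vertices of Y' and elements h_a
with h_a . lift(i(a)) having lift(t(a)) as a face, this edge of X' lying over a.\<close>
definition lift_data ::
  "'h monoid \<Rightarrow> ('h \<Rightarrow> 'x \<Rightarrow> 'x) \<Rightarrow> 'x set \<Rightarrow> ('x \<Rightarrow> 'x \<Rightarrow> bool) \<Rightarrow>
   'v set \<Rightarrow> 'e set \<Rightarrow> ('e \<Rightarrow> 'v) \<Rightarrow> ('e \<Rightarrow> 'v) \<Rightarrow> ('x \<Rightarrow> 'v) \<Rightarrow> ('x \<Rightarrow> 'x \<Rightarrow> 'e) \<Rightarrow>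
   ('v \<Rightarrow> 'x) \<Rightarrow> ('e \<Rightarrow> 'h) \<Rightarrow> bool" where
  "lift_data H act XC fX V E src tgt pv pe lift hs \<longleftrightarrow>
     (\<forall>\<sigma>\<in>V. lift \<sigma> \<in> XC \<and> pv (lift \<sigma>) = \<sigma>) \<and>
     (\<forall>a\<in>E. hs a \<in> carrier H \<and> fX (lift (tgt a)) (act (hs a) (lift (src a))) \<and>
            pe (act (hs a) (lift (src a))) (lift (tgt a)) = a)"

text \<open>The induced complex of groups: local groups are stabilisers of the lifts,
psi_a = Ad(h_a), g_{a,b} = h_a h_b h_{ab}^{-1}.\<close>
definition ind_group :: "'h monoid \<Rightarrow> ('h \<Rightarrow> 'x \<Rightarrow> 'x) \<Rightarrow> ('v \<Rightarrow> 'x) \<Rightarrow> 'v \<Rightarrow> 'h monoid" where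
  "ind_group H act lift \<sigma> = H\<lparr>carrier := stab H act (lift \<sigma>)\<rparr>"

definition ind_psi :: "'h monoid \<Rightarrow> ('e \<Rightarrow> 'h) \<Rightarrow> 'e \<Rightarrow> 'h \<Rightarrow> 'h" where
  "ind_psi H hs a g = hs a \<otimes>\<^bsub>H\<^esub> g \<otimes>\<^bsub>H\<^esub> inv\<^bsub>H\<^esub> (hs a)"

definition ind_tw :: "'h monoid \<Rightarrow> ('e \<Rightarrow> 'h) \<Rightarrow> ('e \<Rightarrow> 'e \<Rightarrow> 'e) \<Rightarrow> 'e \<Rightarrow> 'e \<Rightarrow> 'h" where
  "ind_tw H hs cmp a b = hs a \<otimes>\<^bsub>H\<^esub> hs b \<otimes>\<^bsub>H\<^esub> inv\<^bsub>H\<^esub> (hs (cmp a b))"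

text \<open>Isomorphism (over the identity of Y') of complexes of groups (Gs, psi, tw) -> (Gs', psi', tw')
in the sense of Bridson-Haefliger III.C.2.4.\<close>
definition cog_iso ::
  "'v set \<Rightarrow> 'e set \<Rightarrow> ('e \<Rightarrow> 'v) \<Rightarrow> ('e \<Rightarrow> 'v) \<Rightarrow> ('e \<Rightarrow> 'e \<Rightarrow> 'e) \<Rightarrow>
   ('v \<Rightarrow> 'g monoid) \<Rightarrow> ('e \<Rightarrow> 'g \<Rightarrow> 'g) \<Rightarrow> ('e \<Rightarrow> 'e \<Rightarrow> 'g) \<Rightarrow>
   ('v \<Rightarrow> 'h monoid) \<Rightarrow> ('e \<Rightarrow> 'h \<Rightarrow> 'h) \<Rightarrow> ('e \<Rightarrow> 'e \<Rightarrow> 'h) \<Rightarrow>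
   ('v \<Rightarrow> 'g \<Rightarrow> 'h) \<Rightarrow> ('e \<Rightarrow> 'h) \<Rightarrow> bool" where
  "cog_iso V E src tgt cmp Gs psi tw Gs' psi' tw' phi phie \<longleftrightarrow>
     (\<forall>\<sigma>\<in>V. phi \<sigma> \<in> iso (Gs \<sigma>) (Gs' \<sigma>)) \<and>
     (\<forall>a\<in>E. phie a \<in> carrier (Gs' (tgt a)) \<and>
        (\<forall>x\<in>carrier (Gs (src a)).
           phie a \<otimes>\<^bsub>Gs' (tgt a)\<^esub> psi' a (phi (src a) x) \<otimes>\<^bsub>Gs' (tgt a)\<^esub> inv\<^bsub>Gs' (tgt a)\<^esub> (phie a)
           = phi (tgt a) (psi a x))) \<and>
     (\<forall>a\<in>E. \<forall>b\<in>E. src a = tgt b \<longrightarrow>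
        phi (tgt a) (tw a b) \<otimes>\<^bsub>Gs' (tgt a)\<^esub> phie (cmp a b)
        = phie a \<otimes>\<^bsub>Gs' (tgt a)\<^esub> psi' a (phie b) \<otimes>\<^bsub>Gs' (tgt a)\<^esub> tw' a b)"

text \<open>G(Y) is developable with universal cover the complex (XC, dX, fX): it is isomorphic to the
complex of groups induced by an action without inversions of a group H on XC with quotient Y.\<close>
definition developable_with_cover ::
  "'x set \<Rightarrow> ('x \<Rightarrow> nat) \<Rightarrow> ('x \<Rightarrow> 'x \<Rightarrow> bool) \<Rightarrow> 'h monoid \<Rightarrow> ('h \<Rightarrow> 'x \<Rightarrow> 'x) \<Rightarrow>
   ('x \<Rightarrow> 'v) \<Rightarrow> ('x \<Rightarrow> 'x \<Rightarrow> 'e) \<Rightarrow> ('v \<Rightarrow> 'x) \<Rightarrow> ('e \<Rightarrow> 'h) \<Rightarrow> ('v \<Rightarrow> 'g \<Rightarrow> 'h) \<Rightarrow> ('e \<Rightarrow> 'h) \<Rightarrow>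
   'v set \<Rightarrow> 'e set \<Rightarrow> ('e \<Rightarrow> 'v) \<Rightarrow> ('e \<Rightarrow> 'v) \<Rightarrow> ('e \<Rightarrow> 'e \<Rightarrow> 'e) \<Rightarrow> ('v \<Rightarrow> nat) \<Rightarrow>
   ('v \<Rightarrow> 'g monoid) \<Rightarrow> ('e \<Rightarrow> 'g \<Rightarrow> 'g) \<Rightarrow> ('e \<Rightarrow> 'e \<Rightarrow> 'g) \<Rightarrow> bool" where
  "developable_with_cover XC dX fX H act pv pe lift hs phi phie V E src tgt cmp dimY Gs psi tw \<longleftrightarrow>
     acts_without_inversions H act XC dX fX \<and>
     quotient_iso H act XC dX fX V E src tgt cmp dimY pv pe \<and>
     lift_data H act XC fX V E src tgt pv pe lift hs \<and>
     cog_iso V E src tgt cmp Gs psi tw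
        (ind_group H act lift) (ind_psi H hs) (ind_tw H hs cmp) phi phie"

definition induced_indexing ::
  "('e \<Rightarrow> 'v) \<Rightarrow> ('e \<Rightarrow> 'v) \<Rightarrow> ('v \<Rightarrow> 'g monoid) \<Rightarrow> ('e \<Rightarrow> 'g \<Rightarrow> 'g) \<Rightarrow> 'e \<Rightarrow> nat" where
  "induced_indexing src tgt Gs psi a =
     card (rcosets\<^bsub>Gs (tgt a)\<^esub> (psi a ` carrier (Gs (src a))))"

definition v_thick :: "nat \<Rightarrow> 'v set \<Rightarrow> 'e set \<Rightarrow> ('e \<Rightarrow> 'v) \<Rightarrow> ('v \<Rightarrow> nat) \<Rightarrow> ('e \<Rightarrow> nat) \<Rightarrow> bool" where
  "v_thick v V E tgt dimY Ind \<longleftrightarrow>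
     (\<forall>\<sigma>\<in>V. dimY \<sigma> = 1 \<longrightarrow> (\<Sum>a\<in>{a\<in>E. tgt a = \<sigma>}. Ind a) = v)"

end

theory Submission
  imports Defs
begin


lemma pgon_edges_at:
  assumes pg: "p_gon_cell p dX fX c" and p: "p \<ge> 3" and xv: "x \<in> vfaces dX fX c"
  shows "\<exists>y1 y2. y1 \<noteq> y2 \<and> y1 \<in> efaces dX fX c \<and> y2 \<in> efaces dX fX c \<and>
     x \<in> vfaces dX fX y1 \<and> x \<in> vfaces dX fX y2 \<and>
     {y\<in>efaces dX fX c. x \<in> vfaces dX fX y} \<subseteq> {y1, y2}"
proof -
  obtain xs es where L: "length xs = p" "length es = p" "distinct xs" "distinct es"
    "vfaces dX fX c = set xs" "efaces dX fX c = set es"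
    and V: "\<forall>j<p. vfaces dX fX (es ! j) = {xs ! j, xs ! ((j + 1) mod p)}"
    using pg unfolding p_gon_cell_def by blast
  from xv L obtain i where i: "i < p" "x = xs ! i" by (metis in_set_conv_nth)
  define k where "k = (i + p - 1) mod p"
  have k: "k < p" using p k_def by simp
  have k1: "(k + 1) mod p = i"
  proof (cases "i = 0")
    case True then show ?thesis using p k_def by simp
  next
    case False then have e: "i + p - 1 = (i - 1) + p" by simp
    have "k = ((i - 1) + p) mod p" unfolding k_def e ..
    also have "\<dots> = (i - 1) mod p" by simp
    also have "\<dots> = i - 1" using i by simp
    finally have "k = i - 1" .
    then show ?thesis using False i by simp
  qed
  have ik: "i \<noteq> k"
  proof
    assume "i = k" then have "(i + 1) mod p = i" using k1 by simp
    moreover have "i + 1 < p \<or> i + 1 = p" using i by linarith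
    ultimately show False using p by auto
  qed
  show ?thesis
  proof (intro exI conjI)
    show "es ! i \<noteq> es ! k" using ik i k L by (simp add: nth_eq_iff_index_eq)
    show "es ! i \<in> efaces dX fX c" "es ! k \<in> efaces dX fX c" using L i k by auto
    show "x \<in> vfaces dX fX (es ! i)" using V i by simp
    show "x \<in> vfaces dX fX (es ! k)" using V k k1 i by simp
    show "{y\<in>efaces dX fX c. x \<in> vfaces dX fX y} \<subseteq> {es ! i, es ! k}"
    proof
      fix y assume "y \<in> {y\<in>efaces dX fX c. x \<in> vfaces dX fX y}"
      then obtain j where j: "j < p" "y = es ! j" "x \<in> vfaces dX fX (es ! j)"
        using L by (auto simp: in_set_conv_nth)
      then have "x = xs ! j \<or> x = xs ! ((j + 1) mod p)" using V by auto
      moreover have "(j + 1) mod p < p" using p by simp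
      ultimately have "j = i \<or> (j + 1) mod p = i"
        using i j L by (metis nth_eq_iff_index_eq)
      moreover have "(j + 1) mod p = i \<Longrightarrow> j = k"
      proof -
        assume a: "(j + 1) mod p = i"
        show "j = k"
        proof (cases "j + 1 = p")
          case True then have "i = 0" using a by simp
          then show ?thesis using True k_def p by simp
        next
          case False then have "i = j + 1" using a j by simp
          then show ?thesis using k_def p j by simp
        qed
      qed
      ultimately show "y \<in> {es ! i, es ! k}" using j by auto
    qed
  qed
qed

lemma cells_at_edge:
  assumes PC: "polygonal_complex p XC dX fX" and LK: "links_Kvv v XC dX fX" and p: "p \<ge> 3"
    and eX: "e \<in> XC" and de: "dX e = 1"
  shows "finite {c. fX e c} \<and> card {c. fX e c} = v"
proof -
  have fXC: "\<And>a c. fX a c \<Longrightarrow> a \<in> XC \<and> c \<in> XC \<and> dX a < dX c"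
    and le2: "\<And>c. c \<in> XC \<Longrightarrow> dX c \<le> 2"
    and tr: "\<And>a b c. fX a b \<Longrightarrow> fX b c \<Longrightarrow> fX a c"
    and pgc: "\<And>c. c \<in> XC \<Longrightarrow> dX c = 2 \<Longrightarrow> p_gon_cell p dX fX c"
    using PC unfolding polygonal_complex_def by blast+
  have "card (vfaces dX fX e) = 2" using PC eX de unfolding polygonal_complex_def by blast
  then have "vfaces dX fX e \<noteq> {}" by auto
  then obtain x where x: "fX x e" "dX x = 0" unfolding vfaces_def by auto
  then have xX: "x \<in> XC" using fXC by blast
  define L where "L = {e\<in>XC. dX e = 1 \<and> fX x e}"
  have "\<exists>A B. A \<union> B = L \<and> A \<inter> B = {} \<and> finite A \<and> finite B \<and> card A = v \<and> card B = v \<and>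
          (\<forall>e1\<in>L. \<forall>e2\<in>L. e1 \<noteq> e2 \<longrightarrow>
              finite {c\<in>XC. dX c = 2 \<and> fX e1 c \<and> fX e2 c} \<and>
              card {c\<in>XC. dX c = 2 \<and> fX e1 c \<and> fX e2 c} = (if (e1 \<in> A \<longleftrightarrow> e2 \<in> B) then 1 else 0))"
    using LK xX x(2) unfolding links_Kvv_def Let_def L_def by blast
  then obtain A B where AB: "A \<union> B = L" "A \<inter> B = {}" "finite A" "finite B" "card A = v" "card B = v"
    and F: "\<forall>e1\<in>L. \<forall>e2\<in>L. e1 \<noteq> e2 \<longrightarrow>
              finite {c\<in>XC. dX c = 2 \<and> fX e1 c \<and> fX e2 c} \<and>
              card {c\<in>XC. dX c = 2 \<and> fX e1 c \<and> fX e2 c} = (if (e1 \<in> A \<longleftrightarrow> e2 \<in> B) then 1 else 0)"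
    by blast
  have eL: "e \<in> L" using eX de x unfolding L_def by blast
  define B' where "B' = (if e \<in> A then B else A)"
  have B'v: "finite B'" "card B' = v" using AB B'_def by auto
  have eB': "e \<notin> B'" using AB B'_def by auto
  have B'L: "B' \<subseteq> L" using AB B'_def by auto
  define C where "C = {c. fX e c}"
  have C2: "\<And>c. c \<in> C \<Longrightarrow> c \<in> XC \<and> dX c = 2"
  proof -
    fix c assume "c \<in> C"
    then have "fX e c" unfolding C_def by simp
    then have "c \<in> XC" "dX e < dX c" using fXC by blast+
    moreover have "dX c \<le> 2" using le2 calculation(1) .
    ultimately show "c \<in> XC \<and> dX c = 2" using de by linarith
  qed
  have Fe: "\<And>e'. e' \<in> L \<Longrightarrow> e' \<noteq> e \<Longrightarrow>
      finite {c\<in>C. fX e' c} \<and> card {c\<in>C. fX e' c} = (if e' \<in> B' then 1 else 0)"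
  proof -
    fix e' assume e': "e' \<in> L" "e' \<noteq> e"
    have "{c\<in>XC. dX c = 2 \<and> fX e c \<and> fX e' c} = {c\<in>C. fX e' c}"
      using C2 unfolding C_def by auto
    moreover have "(e \<in> A \<longleftrightarrow> e' \<in> B) = (e' \<in> B')"
      using AB e' eL B'_def by auto
    ultimately show "finite {c\<in>C. fX e' c} \<and> card {c\<in>C. fX e' c} = (if e' \<in> B' then 1 else 0)"
      using F[rule_format, OF eL e'(1)] e'(2) by simp
  qed
  define f where "f e' = (THE c. c \<in> C \<and> fX e' c)" for e'
  have fprop: "\<And>e'. e' \<in> B' \<Longrightarrow> {c\<in>C. fX e' c} = {f e'}"
  proof -
    fix e' assume e': "e' \<in> B'"
    then have "card {c\<in>C. fX e' c} = 1" using Fe B'L eB' by (metis subsetD)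
    then obtain c0 where c0: "{c\<in>C. fX e' c} = {c0}" by (meson card_1_singletonE)
    have "f e' = c0" unfolding f_def
    proof (rule the_equality)
      show "c0 \<in> C \<and> fX e' c0" using c0 by blast
      show "\<And>c. c \<in> C \<and> fX e' c \<Longrightarrow> c = c0" using c0 by blast
    qed
    then show "{c\<in>C. fX e' c} = {f e'}" using c0 by simp
  qed
  have bij: "bij_betw f B' C"
    unfolding bij_betw_def
  proof (intro conjI)
    show "inj_on f B'"
    proof (rule inj_onI, rule ccontr)
      fix e1 e2 assume e12: "e1 \<in> B'" "e2 \<in> B'" "f e1 = f e2" "e1 \<noteq> e2"
      define c where "c = f e1"
      have c1: "c \<in> C" "fX e1 c" using fprop[OF e12(1)] c_def by auto
      have c2: "fX e2 c" using fprop[OF e12(2)] c_def e12(3) by auto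
      have cX: "c \<in> XC" "dX c = 2" using C2 c1 by auto
      have "x \<in> vfaces dX fX c" using tr x c1 unfolding vfaces_def C_def by blast
      then obtain y1 y2 where Y: "{y\<in>efaces dX fX c. x \<in> vfaces dX fX y} \<subseteq> {y1, y2}"
        using pgon_edges_at[OF pgc[OF cX] p] by blast
      have "\<And>y. y \<in> L \<Longrightarrow> fX y c \<Longrightarrow> y \<in> {y\<in>efaces dX fX c. x \<in> vfaces dX fX y}"
        using x unfolding L_def efaces_def vfaces_def by auto
      then have "{e, e1, e2} \<subseteq> {y1, y2}" using Y c1 c2 eL B'L e12 unfolding C_def by blast
      moreover have "e \<noteq> e1" "e \<noteq> e2" using e12 eB' by auto
      then have "card {e, e1, e2} = 3" using e12(4) by simp
      moreover have "card {y1, y2} \<le> 2" by (simp add: card_insert_le_m1)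
      ultimately show False using card_mono[of "{y1, y2}" "{e, e1, e2}"] by simp
    qed
    show "f ` B' = C"
    proof
      show "f ` B' \<subseteq> C" using fprop by blast
      show "C \<subseteq> f ` B'"
      proof
        fix c assume c: "c \<in> C"
        have cX: "c \<in> XC" "dX c = 2" using C2 c by auto
        have "x \<in> vfaces dX fX c" using tr x c unfolding vfaces_def C_def by blast
        then obtain y1 y2 where Y: "y1 \<noteq> y2" "y1 \<in> efaces dX fX c" "y2 \<in> efaces dX fX c"
          "x \<in> vfaces dX fX y1" "x \<in> vfaces dX fX y2"
          using pgon_edges_at[OF pgc[OF cX] p] by blast
        obtain e' where e': "e' \<noteq> e" "e' \<in> efaces dX fX c" "x \<in> vfaces dX fX e'"
          using Y by (cases "y1 = e") (metis, metis)
        have e'L: "e' \<in> L" using e' fXC unfolding L_def efaces_def vfaces_def by auto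
        have "c \<in> {c\<in>C. fX e' c}" using c e' unfolding efaces_def by auto
        moreover have "e' \<notin> B' \<Longrightarrow> {c\<in>C. fX e' c} = {}"
          using Fe[OF e'L e'(1)] by (simp only: if_False) (meson card_0_eq)
        ultimately have "e' \<in> B'" by blast
        then show "c \<in> f ` B'" using fprop \<open>c \<in> {c\<in>C. fX e' c}\<close> by blast
      qed
    qed
  qed
  then have "finite C" "card C = v" using B'v bij_betw_finite[OF bij] bij_betw_same_card[OF bij] by auto
  then show ?thesis unfolding C_def by simp
qed



lemma card_image_cong_rel:
  assumes "\<forall>x\<in>S. \<forall>y\<in>S. f x = f y \<longleftrightarrow> g x = g y"
  shows "card (f ` S) = card (g ` S)"
proof -
  define h where "h z = g (SOME x. x \<in> S \<and> f x = z)" for z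
  have hf: "h (f x) = g x" if "x \<in> S" for x
  proof -
    have "\<exists>x'. x' \<in> S \<and> f x' = f x" using that by blast
    then have "(SOME x'. x' \<in> S \<and> f x' = f x) \<in> S \<and> f (SOME x'. x' \<in> S \<and> f x' = f x) = f x"
      by (rule someI_ex)
    then show ?thesis unfolding h_def using assms that by blast
  qed
  have "bij_betw h (f ` S) (g ` S)"
    unfolding bij_betw_def
  proof
    show "inj_on h (f ` S)"
      by (rule inj_onI) (auto simp: hf assms)
    show "h ` f ` S = g ` S" by (force simp: hf image_image)
  qed
  then show ?thesis by (rule bij_betw_same_card)
qed

context
  fixes H :: "'h monoid" (structure) and act XC and dX :: "'x \<Rightarrow> nat" and fX
  assumes A: "acts_without_inversions H act XC dX fX"
begin

lemma grpH: "group H" using A unfolding acts_without_inversions_def by blast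

lemma act_in: "h \<in> carrier H \<Longrightarrow> x \<in> XC \<Longrightarrow> act h x \<in> XC"
  using A unfolding acts_without_inversions_def bij_betw_def by blast

lemma act_one: "x \<in> XC \<Longrightarrow> act \<one>\<^bsub>H\<^esub> x = x"
  using A unfolding acts_without_inversions_def by blast

lemma act_mult: "g \<in> carrier H \<Longrightarrow> h \<in> carrier H \<Longrightarrow> x \<in> XC \<Longrightarrow> act (g \<otimes>\<^bsub>H\<^esub> h) x = act g (act h x)"
  using A unfolding acts_without_inversions_def by blast

lemma act_inv_act: "g \<in> carrier H \<Longrightarrow> x \<in> XC \<Longrightarrow> act (inv\<^bsub>H\<^esub> g) (act g x) = x"
  using act_mult[of "inv\<^bsub>H\<^esub> g" g x] act_one grpH by (simp add: group.l_inv group.inv_closed)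

lemma act_act_inv: "g \<in> carrier H \<Longrightarrow> x \<in> XC \<Longrightarrow> act g (act (inv\<^bsub>H\<^esub> g) x) = x"
  using act_mult[of g "inv\<^bsub>H\<^esub> g" x] act_one grpH by (simp add: group.r_inv group.inv_closed)

lemma stab_subgroup: "x \<in> XC \<Longrightarrow> subgroup (stab H act x) H"
proof -
  assume x: "x \<in> XC"
  interpret group H by (rule grpH)
  show ?thesis
  proof (rule subgroupI)
    show "stab H act x \<subseteq> carrier H" unfolding stab_def by auto
    show "stab H act x \<noteq> {}" using x act_one unfolding stab_def by auto
    fix a assume "a \<in> stab H act x"
    then show "inv a \<in> stab H act x" using act_inv_act[of a x] x unfolding stab_def by auto
  next
    fix a b assume "a \<in> stab H act x" "b \<in> stab H act x"
    then show "a \<otimes> b \<in> stab H act x" using act_mult x unfolding stab_def by auto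
  qed
qed

lemma conj_stab:
  assumes g: "g \<in> carrier H" and x: "x \<in> XC"
  shows "(\<lambda>y. g \<otimes>\<^bsub>H\<^esub> y \<otimes>\<^bsub>H\<^esub> inv\<^bsub>H\<^esub> g) ` stab H act x = stab H act (act g x)"
proof -
  interpret group H by (rule grpH)
  have gx: "act g x \<in> XC" using act_in g x .
  show ?thesis
  proof
    show "(\<lambda>y. g \<otimes> y \<otimes> inv g) ` stab H act x \<subseteq> stab H act (act g x)"
    proof
      fix z assume "z \<in> (\<lambda>y. g \<otimes> y \<otimes> inv g) ` stab H act x"
      then obtain y where y: "y \<in> carrier H" "act y x = x" "z = g \<otimes> y \<otimes> inv g"
        unfolding stab_def by auto
      have "act z (act g x) = act g (act y (act (inv g) (act g x)))"
        using y g gx x by (simp add: act_mult act_in)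
      also have "\<dots> = act g x" using act_inv_act[OF g x] y by simp
      finally show "z \<in> stab H act (act g x)" using y g unfolding stab_def by simp
    qed
    show "stab H act (act g x) \<subseteq> (\<lambda>y. g \<otimes> y \<otimes> inv g) ` stab H act x"
    proof
      fix z assume "z \<in> stab H act (act g x)"
      then have z: "z \<in> carrier H" "act z (act g x) = act g x" unfolding stab_def by auto
      define y where "y = inv g \<otimes> z \<otimes> g"
      have yc: "y \<in> carrier H" using z g y_def by simp
      have "act y x = act (inv g) (act z (act g x))"
        using z g x y_def by (simp add: act_mult act_in)
      also have "\<dots> = x" using z act_inv_act[OF g x] by simp
      finally have "y \<in> stab H act x" using yc unfolding stab_def by simp
      moreover have "z = g \<otimes> y \<otimes> inv g" using z g y_def by (simp add: m_assoc, simp add: m_assoc[symmetric])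
      ultimately show "z \<in> (\<lambda>y. g \<otimes> y \<otimes> inv g) ` stab H act x" by blast
    qed
  qed
qed

lemma index_orbit:
  assumes c: "c \<in> XC" and e: "e \<in> XC" and sub: "stab H act c \<subseteq> stab H act e"
  shows "card (rcosets\<^bsub>H\<lparr>carrier := stab H act e\<rparr>\<^esub> (stab H act c))
       = card {act h c | h. h \<in> stab H act e}"
proof -
  interpret group H by (rule grpH)
  let ?S = "stab H act e" and ?K = "stab H act c"
  have Ksub: "subgroup ?K H" using stab_subgroup c .
  have Ssub: "subgroup ?S H" using stab_subgroup e .
  have R: "rcosets\<^bsub>H\<lparr>carrier := ?S\<rparr>\<^esub> ?K = (\<lambda>a. ?K #> a) ` ?S"
    unfolding RCOSETS_def r_coset_def by auto
  have O: "{act h c | h. h \<in> ?S} = (\<lambda>a. act (inv a) c) ` ?S"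
  proof
    show "{act h c | h. h \<in> ?S} \<subseteq> (\<lambda>a. act (inv a) c) ` ?S"
    proof
      fix z assume "z \<in> {act h c | h. h \<in> ?S}"
      then obtain h where h: "h \<in> ?S" "z = act h c" by blast
      then have "inv h \<in> ?S" "inv (inv h) = h" using subgroup.m_inv_closed[OF Ssub] Ssub
        by (auto simp: subgroup.mem_carrier)
      then show "z \<in> (\<lambda>a. act (inv a) c) ` ?S" using h by force
    qed
    show "(\<lambda>a. act (inv a) c) ` ?S \<subseteq> {act h c | h. h \<in> ?S}"
      using subgroup.m_inv_closed[OF Ssub] by blast
  qed
  have "\<forall>a\<in>?S. \<forall>b\<in>?S. ?K #> a = ?K #> b \<longleftrightarrow> act (inv a) c = act (inv b) c"
  proof (intro ballI)
    fix a b assume a: "a \<in> ?S" and b: "b \<in> ?S"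
    have ac: "a \<in> carrier H" and bc: "b \<in> carrier H" using a b unfolding stab_def by auto
    have "?K #> a = ?K #> b \<longleftrightarrow> b \<in> ?K #> a"
      using repr_independence[OF _ ac Ksub] repr_independenceD[OF Ksub bc] by blast
    also have "\<dots> \<longleftrightarrow> b \<otimes> inv a \<in> ?K"
      using subgroup.rcos_module[OF Ksub grpH ac bc] .
    also have "\<dots> \<longleftrightarrow> act b (act (inv a) c) = c"
      unfolding stab_def using ac bc c by (simp add: act_mult)
    also have "\<dots> \<longleftrightarrow> act (inv a) c = act (inv b) c"
      using act_inv_act[OF bc, of "act (inv a) c"] act_act_inv[OF bc c] act_in[OF inv_closed[OF ac] c]
      by metis
    finally show "?K #> a = ?K #> b \<longleftrightarrow> act (inv a) c = act (inv b) c" .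
  qed
  then show ?thesis unfolding R O by (rule card_image_cong_rel)
qed

end

lemma iso_rcosets_card:
  assumes G: "group G" and G': "group G'" and phi: "phi \<in> iso G G'" and K: "K \<subseteq> carrier G"
  shows "card (rcosets\<^bsub>G'\<^esub> (phi ` K)) = card (rcosets\<^bsub>G\<^esub> K)"
proof -
  have hom: "phi \<in> hom G G'" and bij: "bij_betw phi (carrier G) (carrier G')"
    using phi unfolding iso_def by auto
  have inj: "inj_on phi (carrier G)" and surj: "phi ` carrier G = carrier G'"
    using bij unfolding bij_betw_def by auto
  have cos: "phi ` K #>\<^bsub>G'\<^esub> phi g = phi ` (K #>\<^bsub>G\<^esub> g)" if g: "g \<in> carrier G" for g
    unfolding r_coset_def using hom K g by (force simp: hom_mult)
  have R1: "rcosets\<^bsub>G'\<^esub> (phi ` K) = (\<lambda>g. phi ` K #>\<^bsub>G'\<^esub> phi g) ` carrier G"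
    unfolding RCOSETS_def surj[symmetric] by auto
  also have "\<dots> = (\<lambda>C. phi ` C) ` (rcosets\<^bsub>G\<^esub> K)"
    unfolding RCOSETS_def using cos by auto
  finally have R: "rcosets\<^bsub>G'\<^esub> (phi ` K) = (\<lambda>C. phi ` C) ` (rcosets\<^bsub>G\<^esub> K)" .
  have sub: "\<And>C. C \<in> rcosets\<^bsub>G\<^esub> K \<Longrightarrow> C \<subseteq> carrier G"
    unfolding RCOSETS_def using K monoid.r_coset_subset_G[OF group.is_monoid[OF G]] by auto
  have "inj_on (\<lambda>C. phi ` C) (rcosets\<^bsub>G\<^esub> K)"
    by (rule inj_onI) (metis sub inj inj_on_image_eq_iff)
  then show ?thesis unfolding R by (rule card_image)
qed



lemma orbit_shift:
  fixes H :: "'h monoid" (structure)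
  assumes A: "acts_without_inversions H act XC dX fX" and x: "x \<in> XC"
    and k: "k \<in> stab H act e" and e: "e \<in> XC"
  shows "{act h (act k x) | h. h \<in> stab H act e} = {act h x | h. h \<in> stab H act e}"
proof -
  interpret group H using grpH[OF A] .
  have Ss: "subgroup (stab H act e) H" using stab_subgroup[OF A e] .
  have kc: "k \<in> carrier H" using k unfolding stab_def by auto
  show ?thesis
  proof (rule equalityI; rule subsetI)
    fix z assume "z \<in> {act h (act k x) | h. h \<in> stab H act e}"
    then obtain h where h: "h \<in> stab H act e" "z = act h (act k x)" by blast
    have hc: "h \<in> carrier H" using h unfolding stab_def by auto
    have "z = act (h \<otimes> k) x" using act_mult[OF A hc kc x] h(2) by simp
    moreover have "h \<otimes> k \<in> stab H act e" using subgroup.m_closed[OF Ss h(1) k] .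
    ultimately show "z \<in> {act h x | h. h \<in> stab H act e}" by blast
  next
    fix z assume "z \<in> {act h x | h. h \<in> stab H act e}"
    then obtain h where h: "h \<in> stab H act e" "z = act h x" by blast
    have hc: "h \<in> carrier H" using h unfolding stab_def by auto
    have ik: "inv k \<in> carrier H" using kc by simp
    have "act (h \<otimes> inv k) (act k x) = act h (act (inv k) (act k x))"
      using act_mult[OF A hc ik act_in[OF A kc x]] .
    also have "\<dots> = act h x" using act_inv_act[OF A kc x] by simp
    finally have eq: "act (h \<otimes> inv k) (act k x) = act h x" .
    have "h \<otimes> inv k \<in> stab H act e"
      using subgroup.m_closed[OF Ss h(1) subgroup.m_inv_closed[OF Ss k]] .
    moreover have "z = act (h \<otimes> inv k) (act k x)" using h(2) eq by simp
    ultimately show "z \<in> {act h (act k x) | h. h \<in> stab H act e}" by blast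
  qed
qed

theorem lemma4p3:
  fixes p v :: nat
    and V :: "'v set" and E :: "'e set" and src tgt :: "'e \<Rightarrow> 'v"
    and cmp :: "'e \<Rightarrow> 'e \<Rightarrow> 'e" and dimY :: "'v \<Rightarrow> nat"
    and Gs :: "'v \<Rightarrow> 'g monoid" and psi :: "'e \<Rightarrow> 'g \<Rightarrow> 'g" and tw :: "'e \<Rightarrow> 'e \<Rightarrow> 'g"
    and XC :: "'x set" and dX :: "'x \<Rightarrow> nat" and fX :: "'x \<Rightarrow> 'x \<Rightarrow> bool"
    and H :: "'h monoid" and act :: "'h \<Rightarrow> 'x \<Rightarrow> 'x"
    and pv :: "'x \<Rightarrow> 'v" and pe :: "'x \<Rightarrow> 'x \<Rightarrow> 'e" and lift :: "'v \<Rightarrow> 'x" and hs :: "'e \<Rightarrow> 'h"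
    and phi :: "'v \<Rightarrow> 'g \<Rightarrow> 'h" and phie :: "'e \<Rightarrow> 'h"
  assumes "p \<ge> 5" and "v \<ge> 2"
    and "complex_of_groups V E src tgt cmp Gs psi tw"
    and "bourdon_building p v XC dX fX"
    and "developable_with_cover XC dX fX H act pv pe lift hs phi phie V E src tgt cmp dimY Gs psi tw"
  shows "v_thick v V E tgt dimY (induced_indexing src tgt Gs psi)"
proof -
  note p = assms(1) and CG = assms(3)
  have PC: "polygonal_complex p XC dX fX" and LK: "links_Kvv v XC dX fX"
    using assms(4) unfolding bourdon_building_def by auto
  have fXC: "\<And>a c. fX a c \<Longrightarrow> a \<in> XC \<and> c \<in> XC \<and> dX a < dX c"
    using PC unfolding polygonal_complex_def by blast
  have A: "acts_without_inversions H act XC dX fX"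
    and Q: "quotient_iso H act XC dX fX V E src tgt cmp dimY pv pe"
    and LD: "lift_data H act XC fX V E src tgt pv pe lift hs"
    and CI: "cog_iso V E src tgt cmp Gs psi tw
        (ind_group H act lift) (ind_psi H hs) (ind_tw H hs cmp) phi phie"
    using assms(5) unfolding developable_with_cover_def by auto
  interpret H: group H using grpH[OF A] .
  have fXact: "\<And>h a c. h \<in> carrier H \<Longrightarrow> a \<in> XC \<Longrightarrow> c \<in> XC \<Longrightarrow> fX (act h a) (act h c) = fX a c"
    and noinv: "\<And>h c a. h \<in> carrier H \<Longrightarrow> c \<in> XC \<Longrightarrow> act h c = c \<Longrightarrow> fX a c \<Longrightarrow> act h a = a"
    using A unfolding acts_without_inversions_def by blast+
  have Qdim: "\<And>x. x \<in> XC \<Longrightarrow> dimY (pv x) = dX x"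
    and QE: "{pe c a | c a. fX a c} = E"
    and Qst: "\<And>a c. fX a c \<Longrightarrow> src (pe c a) = pv c \<and> tgt (pe c a) = pv a"
    and Qeq: "\<And>a c a' c'. fX a c \<Longrightarrow> fX a' c' \<Longrightarrow>
        (pe c a = pe c' a' \<longleftrightarrow> (\<exists>h\<in>carrier H. act h c = c' \<and> act h a = a'))"
    using Q unfolding quotient_iso_def by blast+
  have LDV: "\<And>\<sigma>. \<sigma> \<in> V \<Longrightarrow> lift \<sigma> \<in> XC \<and> pv (lift \<sigma>) = \<sigma>"
    and LDE: "\<And>a. a \<in> E \<Longrightarrow> hs a \<in> carrier H \<and> fX (lift (tgt a)) (act (hs a) (lift (src a))) \<and>
            pe (act (hs a) (lift (src a))) (lift (tgt a)) = a"
    using LD unfolding lift_data_def by blast+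
  have CIiso: "\<And>\<sigma>. \<sigma> \<in> V \<Longrightarrow> phi \<sigma> \<in> iso (Gs \<sigma>) (ind_group H act lift \<sigma>)"
    and CIe: "\<And>a. a \<in> E \<Longrightarrow> phie a \<in> carrier (ind_group H act lift (tgt a)) \<and>
        (\<forall>x\<in>carrier (Gs (src a)).
           phie a \<otimes>\<^bsub>ind_group H act lift (tgt a)\<^esub> ind_psi H hs a (phi (src a) x)
             \<otimes>\<^bsub>ind_group H act lift (tgt a)\<^esub> inv\<^bsub>ind_group H act lift (tgt a)\<^esub> (phie a)
           = phi (tgt a) (psi a x))"
    using CI unfolding cog_iso_def by blast+
  have CGgrp: "\<And>\<sigma>. \<sigma> \<in> V \<Longrightarrow> group (Gs \<sigma>)"
    and CGE: "\<And>a. a \<in> E \<Longrightarrow> src a \<in> V \<and> tgt a \<in> V \<and> psi a \<in> hom (Gs (src a)) (Gs (tgt a))"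
    using CG unfolding complex_of_groups_def by blast+
  show ?thesis
    unfolding v_thick_def
  proof (intro ballI impI)
    fix \<sigma> assume sV: "\<sigma> \<in> V" and d1: "dimY \<sigma> = 1"
    define e where "e = lift \<sigma>"
    have eX: "e \<in> XC" and pve: "pv e = \<sigma>" using LDV[OF sV] e_def by auto
    have de: "dX e = 1" using Qdim[OF eX] pve d1 by simp
    define C where "C = {c. fX e c}"
    have Cfin: "finite C" and Ccard: "card C = v"
      using cells_at_edge[OF PC LK _ eX de] p unfolding C_def by auto
    define S where "S = {a\<in>E. tgt a = \<sigma>}"
    have SC: "S = (\<lambda>c. pe c e) ` C"
    proof
      show "S \<subseteq> (\<lambda>c. pe c e) ` C"
      proof
        fix a assume "a \<in> S"
        then have a: "a \<in> E" "tgt a = \<sigma>" unfolding S_def by auto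
        then show "a \<in> (\<lambda>c. pe c e) ` C" using LDE[OF a(1)] e_def unfolding C_def by force
      qed
      show "(\<lambda>c. pe c e) ` C \<subseteq> S"
      proof
        fix a assume "a \<in> (\<lambda>c. pe c e) ` C"
        then obtain c where c: "fX e c" "a = pe c e" unfolding C_def by auto
        then have "a \<in> E" using QE by blast
        then show "a \<in> S" using Qst[OF c(1)] c pve unfolding S_def by simp
      qed
    qed
    have Sfin: "finite S" using SC Cfin by simp
    have key: "induced_indexing src tgt Gs psi a = card {c\<in>C. pe c e = a}" if aS: "a \<in> S" for a
    proof -
      have a: "a \<in> E" "tgt a = \<sigma>" using aS unfolding S_def by auto
      define s where "s = src a"
      have sV': "s \<in> V" using CGE[OF a(1)] s_def by simp
      define c0 where "c0 = lift s"
      have c0X: "c0 \<in> XC" using LDV[OF sV'] c0_def by simp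
      define ha where "ha = hs a"
      define ca where "ca = act ha c0"
      have ha: "ha \<in> carrier H" using LDE[OF a(1)] ha_def by simp
      have caC: "fX e ca" and pea: "pe ca e = a"
        using LDE[OF a(1)] a(2) e_def ha_def ca_def c0_def s_def by auto
      have caX: "ca \<in> XC" using fXC[OF caC] by simp
      define k where "k = phie a"
      have kS: "k \<in> stab H act e"
        using CIe[OF a(1)] a(2) e_def k_def unfolding ind_group_def by simp
      have kc: "k \<in> carrier H" using kS unfolding stab_def by simp
      have Se: "subgroup (stab H act e) H" using stab_subgroup[OF A eX] .
      define IG where "IG = ind_group H act lift"
      have IGs: "IG s = H\<lparr>carrier := stab H act c0\<rparr>" unfolding IG_def ind_group_def c0_def ..
      have IGt: "IG \<sigma> = H\<lparr>carrier := stab H act e\<rparr>" unfolding IG_def ind_group_def e_def ..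
      have grpIG: "group (IG \<sigma>)" unfolding IGt using subgroup.subgroup_is_group[OF Se H.group_axioms] .
      have grpGs: "group (Gs \<sigma>)" using CGgrp[OF sV] .
      have hom: "psi a \<in> hom (Gs s) (Gs \<sigma>)" using CGE[OF a(1)] a(2) s_def by simp
      define K where "K = psi a ` carrier (Gs s)"
      have Ksub: "K \<subseteq> carrier (Gs \<sigma>)" using hom unfolding K_def hom_def by auto
      have isoS: "phi \<sigma> \<in> iso (Gs \<sigma>) (IG \<sigma>)" using CIiso[OF sV] IG_def by simp
      have isos: "phi s \<in> iso (Gs s) (IG s)" using CIiso[OF sV'] IG_def by simp
      have phis_img: "phi s ` carrier (Gs s) = stab H act c0"
        using isos unfolding iso_def bij_betw_def IGs by simp
      have invk: "inv\<^bsub>IG \<sigma>\<^esub> k = inv\<^bsub>H\<^esub> k" unfolding IGt using H.m_inv_consistent[OF Se kS] .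
      have phiK: "phi \<sigma> ` K = (\<lambda>y. k \<otimes>\<^bsub>H\<^esub> y \<otimes>\<^bsub>H\<^esub> inv\<^bsub>H\<^esub> k) `
                    ((\<lambda>y. ha \<otimes>\<^bsub>H\<^esub> y \<otimes>\<^bsub>H\<^esub> inv\<^bsub>H\<^esub> ha) ` stab H act c0)"
      proof -
        have "\<And>x. x \<in> carrier (Gs s) \<Longrightarrow> phi \<sigma> (psi a x) =
              k \<otimes>\<^bsub>H\<^esub> (ha \<otimes>\<^bsub>H\<^esub> phi s x \<otimes>\<^bsub>H\<^esub> inv\<^bsub>H\<^esub> ha) \<otimes>\<^bsub>H\<^esub> inv\<^bsub>H\<^esub> k"
        proof -
          fix x assume x: "x \<in> carrier (Gs s)"
          have "phi \<sigma> (psi a x) = k \<otimes>\<^bsub>IG \<sigma>\<^esub> ind_psi H hs a (phi s x) \<otimes>\<^bsub>IG \<sigma>\<^esub> inv\<^bsub>IG \<sigma>\<^esub> k"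
            using CIe[OF a(1)] x a(2) s_def k_def IG_def by simp
          then show "phi \<sigma> (psi a x) =
              k \<otimes>\<^bsub>H\<^esub> (ha \<otimes>\<^bsub>H\<^esub> phi s x \<otimes>\<^bsub>H\<^esub> inv\<^bsub>H\<^esub> ha) \<otimes>\<^bsub>H\<^esub> inv\<^bsub>H\<^esub> k"
            unfolding invk by (simp add: IGt ind_psi_def ha_def)
        qed
        then have "phi \<sigma> ` K = (\<lambda>x. k \<otimes>\<^bsub>H\<^esub> (ha \<otimes>\<^bsub>H\<^esub> phi s x \<otimes>\<^bsub>H\<^esub> inv\<^bsub>H\<^esub> ha) \<otimes>\<^bsub>H\<^esub> inv\<^bsub>H\<^esub> k) ` carrier (Gs s)"
          unfolding K_def image_image by (rule image_cong[OF refl])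
        also have "\<dots> = (\<lambda>y. k \<otimes>\<^bsub>H\<^esub> y \<otimes>\<^bsub>H\<^esub> inv\<^bsub>H\<^esub> k) `
                    ((\<lambda>y. ha \<otimes>\<^bsub>H\<^esub> y \<otimes>\<^bsub>H\<^esub> inv\<^bsub>H\<^esub> ha) ` (phi s ` carrier (Gs s)))"
          by (simp add: image_image)
        finally show ?thesis unfolding phis_img .
      qed
      define c' where "c' = act k ca"
      have phiK': "phi \<sigma> ` K = stab H act c'"
        unfolding phiK c'_def ca_def conj_stab[OF A ha c0X] conj_stab[OF A kc act_in[OF A ha c0X]] ..
      have c'X: "c' \<in> XC" using act_in[OF A kc caX] c'_def by simp
      have ke: "act k e = e" using kS unfolding stab_def by simp
      have c'C: "fX e c'" using fXact[OF kc eX caX] caC ke c'_def by simp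
      have substab: "stab H act c' \<subseteq> stab H act e"
        using noinv[OF _ c'X _ c'C] unfolding stab_def by auto
      have "induced_indexing src tgt Gs psi a = card (rcosets\<^bsub>Gs \<sigma>\<^esub> K)"
        unfolding induced_indexing_def K_def s_def a(2) ..
      also have "\<dots> = card (rcosets\<^bsub>IG \<sigma>\<^esub> (phi \<sigma> ` K))"
        using iso_rcosets_card[OF grpGs grpIG isoS Ksub] by simp
      also have "\<dots> = card {act h c' | h. h \<in> stab H act e}"
        unfolding phiK' IGt using index_orbit[OF A c'X eX substab] .
      also have "{act h c' | h. h \<in> stab H act e} = {act h ca | h. h \<in> stab H act e}"
        unfolding c'_def using orbit_shift[OF A caX kS eX] .
      also have "{act h ca | h. h \<in> stab H act e} = {c\<in>C. pe c e = a}"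
      proof (rule equalityI; rule subsetI)
        fix z assume "z \<in> {act h ca | h. h \<in> stab H act e}"
        then obtain h where h: "h \<in> carrier H" "act h e = e" "z = act h ca" unfolding stab_def by blast
        have zC: "fX e z" using fXact[OF h(1) eX caX] caC h by simp
        have "pe ca e = pe z e" using Qeq[OF caC zC] h by metis
        then show "z \<in> {c\<in>C. pe c e = a}" using zC pea unfolding C_def by simp
      next
        fix z assume "z \<in> {c\<in>C. pe c e = a}"
        then have z: "fX e z" "pe z e = pe ca e" unfolding C_def using pea by auto
        then obtain h where "h \<in> carrier H" "act h ca = z" "act h e = e" using Qeq[OF caC z(1)] by metis
        then show "z \<in> {act h ca | h. h \<in> stab H act e}" unfolding stab_def by blast
      qed
      finally show ?thesis .
    qed
    have "(\<Sum>a\<in>S. induced_indexing src tgt Gs psi a) = (\<Sum>a\<in>S. card {c\<in>C. pe c e = a})"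
      using key by simp
    also have "\<dots> = card C"
      unfolding card_eq_sum SC by (rule sum.group[OF Cfin finite_imageI[OF Cfin] subset_refl])
    also have "\<dots> = v" using Ccard by simp
    finally show "(\<Sum>a\<in>{a\<in>E. tgt a = \<sigma>}. induced_indexing src tgt Gs psi a) = v"
      unfolding S_def .
  qed
qed

end
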